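(* Let $(Q,\star,e)$ be a double Ward quasigroup. Define $x\bullet y=(e\star x)\star y$. Then $(Q,\bullet)$ is a Ward quasigroup, i.e. a quasigroup satisfying $(x\bullet z)\bullet(y\bullet z)=x\bullet y$ for all $x,y,z\in Q$.
   Context: A quasigroup is a magma in which $ax=b$ and $ya=b$ have unique solutions for all $a,b$. A double Ward quasigroup $(Q,\star,e)$ is a quasigroup $(Q,\star)$ with an element $e$ such that $((e\star e)\star(x\star z))\star((e\star y)\star z)=x\star y$ for all $x,y,z\in Q$. *)

theory Defs
  imports Main
begin

definition quasigroup :: "('a \<Rightarrow> 'a \<Rightarrow> 'a) \<Rightarrow> bool" where
  "quasigroup m \<longleftrightarrow> (\<forall>a b. (\<exists>!x. m a x = b) \<and> (\<exists>!y. m y a = b))"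

definition double_ward_quasigroup :: "('a \<Rightarrow> 'a \<Rightarrow> 'a) \<Rightarrow> 'a \<Rightarrow> bool" where
  "double_ward_quasigroup m e \<longleftrightarrow> quasigroup m \<and>
     (\<forall>x y z. m (m (m e e) (m x z)) (m (m e y) z) = m x y)"

definition ward_quasigroup :: "('a \<Rightarrow> 'a \<Rightarrow> 'a) \<Rightarrow> bool" where
  "ward_quasigroup m \<longleftrightarrow> quasigroup m \<and> (\<forall>x y z. m (m x z) (m y z) = m x y)"

end

theory Submission
  imports Defs
begin

theorem proposition4p3:
  fixes star :: "'a \<Rightarrow> 'a \<Rightarrow> 'a" and e :: 'a
  assumes "double_ward_quasigroup star e"
  shows "ward_quasigroup (\<lambda>x y. star (star e x) y)"
proof -
  have q: "quasigroup star" and dw: "\<And>x y z. star (star (star e e) (star x z)) (star (star e y) z) = star x y"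
    using assms unfolding double_ward_quasigroup_def by auto
  have lu: "\<And>a b. \<exists>!x. star a x = b" and ru: "\<And>a b. \<exists>!y. star y a = b"
    using q unfolding quasigroup_def by auto
  have lc: "\<And>a x y. star a x = star a y \<Longrightarrow> x = y" using lu by metis
  have rc: "\<And>a x y. star x a = star y a \<Longrightarrow> x = y" using ru by metis
  have c: "star (star (star e e) w) w = star (star e y) y" for w y
  proof -
    obtain z where "star (star e y) z = w" using lu by metis
    thus ?thesis using dw[of "star e y" z y] by simp
  qed
  have "star (star (star e e) y) y = star (star e y) y" for y using c by simp
  hence "star (star e e) y = star e y" for y using rc by metis
  hence ee: "star e e = e" using rc by metis
  have W: "\<forall>x y z. star (star e (star (star e x) z)) (star (star e y) z) = star (star e x) y"
    using dw ee by metis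
  have Q: "quasigroup (\<lambda>x y. star (star e x) y)"
    unfolding quasigroup_def
  proof (intro allI conjI)
    fix a b
    show "\<exists>!x. star (star e a) x = b" using lu by metis
    obtain t where t: "star t a = b" using ru by metis
    obtain y where y: "star e y = t" using lu by metis
    show "\<exists>!y. star (star e y) a = b"
    proof (rule ex1I[of _ y])
      show "star (star e y) a = b" using t y by simp
      fix y' assume "star (star e y') a = b"
      hence "star e y' = star e y" using t y rc by metis
      thus "y' = y" using lc by metis
    qed
  qed
  show ?thesis unfolding ward_quasigroup_def using Q W by simp
qed

end
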